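(* Let $r\ge0$ be an integer, let $a,b,c,z,A_1,\dots,A_{r+1},B_1,\dots,B_r$ and $q$ be complex numbers with $|q|<1$ and $|cz|<1$ (generic, so that all denominators are nonzero and all series converge). Then $$\frac{(azq;q)_\infty}{(bz;q)_\infty}\,{}_{r+1}\phi_r\Big[\genfrac{}{}{0pt}{}{A_1,\ldots,A_{r+1}}{B_1,\ldots,B_{r}};q,cz\Big] =\lim_{x,y\to\infty}\sum_{n=0}^{\infty}\frac{(az,(az)^{1/2}q,-(az)^{1/2}q,aq/b,x,y;q)_n}{(q,(az)^{1/2},-(az)^{1/2},bz,azq/x,azq/y;q)_n}\Big(\frac{bz}{xy}\Big)^n \,{}_{r+3}\phi_{r+2}\Big[\genfrac{}{}{0pt}{}{azq^n,azq^{2n+1},A_1,\ldots,A_{r+1}}{bzq^n,azq^{2n},B_1,\ldots,B_{r}};q,czq^n\Big].$$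
   Context: $(x;q)_\infty=\prod_{j\ge0}(1-xq^j)$, $(x;q)_n=\prod_{j=0}^{n-1}(1-xq^j)$, and $(x_1,\dots,x_m;q)_n=\prod_{i=1}^m(x_i;q)_n$. The basic hypergeometric series is ${}_{s+1}\phi_s\big[\genfrac{}{}{0pt}{}{a_1,\ldots,a_{s+1}}{b_1,\ldots,b_{s}};q,w\big]=\sum_{n\ge0}\frac{(a_1,\ldots,a_{s+1};q)_n}{(q,b_1,\ldots,b_s;q)_n}w^n$. *)

theory Defs
  imports "HOL-Analysis.Analysis"
begin

definition qpoch :: "complex \<Rightarrow> complex \<Rightarrow> nat \<Rightarrow> complex" where
  "qpoch x q n = (\<Prod>j<n. 1 - x * q ^ j)"

definition qpoch_inf :: "complex \<Rightarrow> complex \<Rightarrow> complex" where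
  "qpoch_inf x q = (\<Prod>j. 1 - x * q ^ j)"

definition qphi :: "complex list \<Rightarrow> complex list \<Rightarrow> complex \<Rightarrow> complex \<Rightarrow> complex" where
  "qphi as bs q w =
     (\<Sum>n. (\<Prod>a\<leftarrow>as. qpoch a q n) / (qpoch q q n * (\<Prod>b\<leftarrow>bs. qpoch b q n)) * w ^ n)"

end

theory Submission
  imports Defs
begin

lemma qpoch_0[simp]: "qpoch t q 0 = 1"
  by (simp add: qpoch_def)

lemma qpoch_Suc: "qpoch t q (Suc n) = qpoch t q n * (1 - t * q ^ n)"
  by (simp add: qpoch_def)

lemma qpoch_Suc': "qpoch t q (Suc n) = (1 - t) * qpoch (t * q) q n"
  unfolding qpoch_def by (subst prod.lessThan_Suc_shift) (simp add: mult.assoc)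

lemma qpoch_add: "qpoch t q (m + k) = qpoch t q m * qpoch (t * q ^ m) q k"
  by (induction k) (simp_all add: qpoch_Suc power_add mult.assoc)

lemma qpoch_zero_param[simp]: "qpoch 0 q n = 1"
  by (simp add: qpoch_def)

lemma qpoch_nonzero:
  assumes "\<And>j. t * q ^ j \<noteq> 1"
  shows "qpoch t q n \<noteq> 0"
  unfolding qpoch_def using assms by (simp add: prod_zero_iff)

lemma geom_partial_le:
  fixes r :: real
  assumes "0 \<le> r" "r < 1"
  shows "(\<Sum>j<n. r ^ j) \<le> 1 / (1 - r)"
proof -
  have "(\<Sum>j<n. r ^ j) \<le> (\<Sum>j. r ^ j)"
    by (rule sum_le_suminf) (use assms in \<open>auto intro: summable_geometric\<close>)
  also have "\<dots> = 1 / (1 - r)" using assms by (simp add: suminf_geometric)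
  finally show ?thesis .
qed

lemma qpoch_norm_le:
  assumes "norm q < 1"
  shows "norm (qpoch t q n) \<le> exp (norm t / (1 - norm q))"
proof -
  have "norm (qpoch t q n) = (\<Prod>j<n. norm (1 - t * q ^ j))"
    by (simp add: qpoch_def prod_norm)
  also have "\<dots> \<le> (\<Prod>j<n. exp (norm t * norm q ^ j))"
  proof (rule prod_mono, safe)
    fix j
    have "norm (1 - t * q ^ j) \<le> 1 + norm t * norm q ^ j"
      using norm_triangle_ineq4[of 1 "t * q ^ j"] by (simp add: norm_mult norm_power)
    also have "\<dots> \<le> exp (norm t * norm q ^ j)" by (rule exp_ge_add_one_self)
    finally show "norm (1 - t * q ^ j) \<le> exp (norm t * norm q ^ j)" .
  qed simp
  also have "\<dots> = exp (norm t * (\<Sum>j<n. norm q ^ j))"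
    by (simp add: exp_sum sum_distrib_left)
  also have "\<dots> \<le> exp (norm t * (1 / (1 - norm q)))"
    using geom_partial_le[of "norm q" n] assms by (intro exp_mono mult_left_mono) auto
  finally show ?thesis by simp
qed

lemma inv_one_minus_le:
  fixes s :: complex
  assumes "norm s \<le> 1/2"
  shows "norm (1 / (1 - s)) \<le> exp (2 * norm s)"
proof -
  have "1 - norm s \<le> norm (1 - s)"
    using norm_triangle_ineq2[of 1 s] by simp
  moreover have pos: "1 - norm s > 0" using assms by simp
  ultimately have "norm (1 / (1 - s)) \<le> 1 / (1 - norm s)"
    by (simp add: norm_divide divide_simps)
  also have "\<dots> \<le> 1 + 2 * norm s"
  proof -
    have "1 \<le> (1 + 2 * norm s) * (1 - norm s)"
      using assms mult_left_mono[of "norm s * 2" 1 "norm s"] by (simp add: algebra_simps)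
    thus ?thesis using pos by (simp add: divide_simps)
  qed
  also have "\<dots> \<le> exp (2 * norm s)" by (rule exp_ge_add_one_self)
  finally show ?thesis .
qed

lemma qpoch_inv_norm_le_small:
  assumes "norm q < 1" "norm t \<le> 1/2"
  shows "norm (1 / qpoch t q n) \<le> exp (2 * norm t / (1 - norm q))"
proof -
  have nq: "norm q ^ j \<le> 1" for j using assms by (simp add: power_le_one)
  have "norm (1 / qpoch t q n) = (\<Prod>j<n. norm (1 / (1 - t * q ^ j)))"
    by (simp add: qpoch_def norm_divide prod_norm prod_dividef)
  also have "\<dots> \<le> (\<Prod>j<n. exp (2 * (norm t * norm q ^ j)))"
  proof (rule prod_mono, safe)
    fix j
    have "norm (t * q ^ j) \<le> norm t"
      using nq[of j] by (simp add: norm_mult norm_power mult_left_le)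
    hence "norm (t * q ^ j) \<le> 1/2" using assms by simp
    from inv_one_minus_le[OF this]
    show "norm (1 / (1 - t * q ^ j)) \<le> exp (2 * (norm t * norm q ^ j))"
      by (simp add: norm_mult norm_power)
  qed simp
  also have "\<dots> = exp (2 * norm t * (\<Sum>j<n. norm q ^ j))"
    by (simp add: exp_sum sum_distrib_left mult.assoc)
  also have "\<dots> \<le> exp (2 * norm t * (1 / (1 - norm q)))"
    using geom_partial_le[of "norm q" n] assms by (intro exp_mono mult_left_mono) auto
  finally show ?thesis by simp
qed

lemma qpoch_inv_bounded:
  assumes q: "norm q < 1" and t: "\<And>j. t * q ^ j \<noteq> 1"
  shows "\<exists>B. \<forall>n. norm (1 / qpoch t q n) \<le> B"
proof -
  have "(\<lambda>j. norm t * norm q ^ j) \<longlonglongrightarrow> norm t * 0"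
    by (intro tendsto_intros) (use q in auto)
  then have "eventually (\<lambda>n. norm t * norm q ^ n < 1/2) sequentially"
    by (rule order_tendstoD) simp
  then obtain N where N: "norm t * norm q ^ N < 1/2"
    by (auto simp: eventually_sequentially)
  define S where "S = (\<Sum>m\<le>N. norm (1 / qpoch t q m))"
  define E where "E = exp (2 * norm (t * q ^ N) / (1 - norm q))"
  have E1: "1 \<le> E" unfolding E_def using q by simp
  have S: "norm (1 / qpoch t q m) \<le> S" if "m \<le> N" for m
    unfolding S_def by (rule member_le_sum) (use that in auto)
  have "norm (1 / qpoch t q n) \<le> S * E" for n
  proof (cases "n \<le> N")
    case True
    have "S \<le> S * E" using E1 S[of 0] by (simp add: mult_le_cancel_left1 order_trans)
    then show ?thesis using S[OF True] by linarith
  next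
    case False
    then obtain k where k: "n = N + k" by (metis le_add_diff_inverse nat_le_linear)
    have sm: "norm (t * q ^ N) \<le> 1/2" using N by (simp add: norm_mult norm_power)
    have "norm (1 / qpoch t q n) = norm (1 / qpoch t q N) * norm (1 / qpoch (t * q ^ N) q k)"
      by (simp add: k qpoch_add norm_divide norm_mult)
    also have "\<dots> \<le> S * E"
      by (intro mult_mono S qpoch_inv_norm_le_small[OF q sm, folded E_def]) (auto simp: E_def S_def intro: sum_nonneg)
    finally show ?thesis .
  qed
  thus ?thesis by blast
qed

lemma qpoch_bounded:
  assumes q: "norm q < 1"
  shows "\<exists>B. \<forall>n. norm (qpoch t q n) \<le> B"
  using qpoch_norm_le[OF q] by blast

lemma qpoch_LIMSEQ:
  assumes q: "norm q < 1"
  shows "(\<lambda>n. qpoch t q n) \<longlonglongrightarrow> qpoch_inf t q"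
proof -
  have "summable (\<lambda>j. norm ((1 - t * q ^ j) - 1))"
    using q by (simp add: norm_mult norm_power summable_geometric)
  hence "convergent_prod (\<lambda>j. 1 - t * q ^ j)"
    by (intro abs_convergent_prod_imp_convergent_prod summable_imp_abs_convergent_prod)
  from convergent_prod_LIMSEQ[OF this]
  have "(\<lambda>n. \<Prod>j\<le>n. 1 - t * q ^ j) \<longlonglongrightarrow> qpoch_inf t q"
    by (simp add: qpoch_inf_def)
  thus ?thesis unfolding qpoch_def by (simp add: LIMSEQ_lessThan_iff_atMost)
qed

lemma qpoch_inf_nonzero:
  assumes q: "norm q < 1" and t: "\<And>j. t * q ^ j \<noteq> 1"
  shows "qpoch_inf t q \<noteq> 0"
proof -
  have "summable (\<lambda>j. norm ((1 - t * q ^ j) - 1))"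
    using q by (simp add: norm_mult norm_power summable_geometric)
  hence "convergent_prod (\<lambda>j. 1 - t * q ^ j)"
    by (intro abs_convergent_prod_imp_convergent_prod summable_imp_abs_convergent_prod)
  thus ?thesis unfolding qpoch_inf_def by (rule prodinf_nonzero) (use t in auto)
qed



lemma list_qpoch_bounded:
  assumes q: "norm q < 1"
  shows "\<exists>C\<ge>0. \<forall>k. norm (\<Prod>a\<leftarrow>As. qpoch a q k) \<le> C"
proof (induction As)
  case Nil then show ?case by (intro exI[of _ 1]) simp
next
  case (Cons x As)
  then obtain C where C: "C \<ge> 0" "\<And>k. norm (\<Prod>a\<leftarrow>As. qpoch a q k) \<le> C" by blast
  define D where "D = exp (norm x / (1 - norm q))"
  have D: "norm (qpoch x q k) \<le> D" for k unfolding D_def by (rule qpoch_norm_le[OF q])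
  have "norm (\<Prod>a\<leftarrow>x # As. qpoch a q k) \<le> D * C" for k
    by (simp add: norm_mult) (intro mult_mono D C, auto simp: D_def)
  then show ?case using C by (intro exI[of _ "D * C"]) (auto simp: D_def)
qed

lemma list_qpoch_inv_bounded:
  assumes q: "norm q < 1" and B: "\<And>B j. B \<in> set Bs \<Longrightarrow> B * q ^ j \<noteq> 1"
  shows "\<exists>C\<ge>0. \<forall>k. norm (1 / (\<Prod>b\<leftarrow>Bs. qpoch b q k)) \<le> C"
  using B
proof (induction Bs)
  case Nil then show ?case by (intro exI[of _ 1]) simp
next
  case (Cons x Bs)
  then obtain C where C: "C \<ge> 0" "\<And>k. norm (1 / (\<Prod>b\<leftarrow>Bs. qpoch b q k)) \<le> C" by force
  obtain D where D: "\<And>k. norm (1 / qpoch x q k) \<le> D"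
    using qpoch_inv_bounded[OF q, of x] Cons.prems by auto
  have D0: "D \<ge> 0" using D[of 0] norm_ge_zero order_trans by blast
  have "norm (1 / (\<Prod>b\<leftarrow>x # Bs. qpoch b q k)) \<le> D * C" for k
  proof -
    have "norm (1 / (\<Prod>b\<leftarrow>x # Bs. qpoch b q k)) = norm (1 / qpoch x q k) * norm (1 / (\<Prod>b\<leftarrow>Bs. qpoch b q k))"
      by (simp add: norm_mult norm_divide)
    also have "\<dots> \<le> D * C" by (intro mult_mono D C D0) auto
    finally show ?thesis .
  qed
  then show ?case using C D0 by (intro exI[of _ "D * C"]) auto
qed

lemma summable_prod_eps:
  assumes q: "norm q < 1" and e: "0 < e" and K: "0 \<le> K" and c: "4 * K * e ^ 2 < 1"
  shows "summable (\<lambda>n. K ^ n * (\<Prod>j<n. e + norm q ^ j) ^ 2)"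
proof -
  have "(\<lambda>n. norm q ^ n) \<longlonglongrightarrow> 0" using q by (intro LIMSEQ_power_zero) auto
  then have "eventually (\<lambda>n. norm q ^ n < e) sequentially" using e by (rule order_tendstoD)
  then obtain N where N: "\<And>n. n \<ge> N \<Longrightarrow> norm q ^ n < e" by (auto simp: eventually_sequentially)
  show ?thesis
  proof (rule summable_ratio_test[where c = "4 * K * e ^ 2" and N = N])
    fix n assume n: "n \<ge> N"
    define P where "P = (\<Prod>j<n. e + norm q ^ j)"
    have P0: "P \<ge> 0" unfolding P_def using e by (intro prod_nonneg) auto
    have sq: "(e + norm q ^ n) ^ 2 \<le> (2 * e) ^ 2"
      using N[OF n] e by (intro power_mono) auto
    have kk: "K * (e + norm q ^ n) ^ 2 \<le> K * (2 * e) ^ 2" by (rule mult_left_mono[OF sq K])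
    have "K ^ n * P ^ 2 * (K * (e + norm q ^ n) ^ 2) \<le> K ^ n * P ^ 2 * (K * (2 * e) ^ 2)"
      using mult_left_mono[OF kk, of "K ^ n * P ^ 2"] K P0 by simp
    thus "norm (K ^ Suc n * (\<Prod>j<Suc n. e + norm q ^ j) ^ 2)
          \<le> 4 * K * e ^ 2 * norm (K ^ n * (\<Prod>j<n. e + norm q ^ j) ^ 2)"
      using K P0 e by (simp add: P_def[symmetric] abs_mult power_mult_distrib algebra_simps power2_eq_square)
  qed (rule c)
qed



lemma qpoch_pm_ratio:
  assumes s: "s ^ 2 = u" and u: "\<And>j. u * q ^ j \<noteq> 1"
  shows "qpoch (s * q) q n * qpoch (- s * q) q n / (qpoch s q n * qpoch (- s) q n)
         = (1 - u * q ^ (2 * n)) / (1 - u)"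
proof -
  have pm: "(1 - s * q ^ j) * (1 - (- s) * q ^ j) = 1 - u * q ^ (2 * j)" for j
  proof -
    have "(1 - s * q ^ j) * (1 - (- s) * q ^ j) = 1 - s^2 * (q ^ j)^2"
      by (simp add: algebra_simps power2_eq_square)
    also have "(q ^ j)^2 = q ^ (2 * j)" by (simp add: power_mult[symmetric] mult.commute)
    finally show ?thesis using s by simp
  qed
  have nz: "qpoch s q n * qpoch (- s) q n \<noteq> 0"
  proof -
    have "qpoch s q n * qpoch (- s) q n = (\<Prod>j<n. 1 - u * q ^ (2 * j))"
      unfolding qpoch_def prod.distrib[symmetric] pm ..
    also have "\<dots> \<noteq> 0" using u[of "2 * _"] by (auto simp: prod_zero_iff)
    finally show ?thesis .
  qed
  have u1: "1 - u \<noteq> 0" using u[of 0] by simp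
  have e1: "(1 - s) * qpoch (s * q) q n = qpoch s q n * (1 - s * q ^ n)"
    using qpoch_Suc[of s q n] qpoch_Suc'[of s q n] by simp
  have e2: "(1 - (- s)) * qpoch (- s * q) q n = qpoch (- s) q n * (1 - (- s) * q ^ n)"
    using qpoch_Suc[of "- s" q n] qpoch_Suc'[of "- s" q n] by simp
  have su: "(1 - s) * (1 - (- s)) = 1 - u" using s by (simp add: algebra_simps power2_eq_square)
  have "(qpoch (s * q) q n * qpoch (- s * q) q n) * (1 - u)
        = ((1 - s) * qpoch (s * q) q n) * ((1 - (- s)) * qpoch (- s * q) q n)"
    unfolding su[symmetric] by (simp only: ac_simps)
  also have "\<dots> = (1 - u * q ^ (2 * n)) * (qpoch s q n * qpoch (- s) q n)"
    unfolding e1 e2 pm[of n, symmetric] by (simp only: ac_simps)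
  finally show ?thesis by (subst frac_eq_eq[OF nz u1])
qed



lemma tele_alg:
  fixes A V P Q L X Y Z u v p q vn :: complex
  assumes pv: "p * v = u * q" and nz: "V \<noteq> 0" "1 - v * X * Y \<noteq> 0" "Q \<noteq> 0" "1 - q * X \<noteq> 0"
  shows "A / V * (1 - u * (X^2 * Y)) * P / Q * L^2 * vn * Z
       - A * (1 - u * X * Y) / (V * (1 - v * X * Y)) * (1 - u * (X^2 * Y * q)) * P / Q * L^2 * vn * (Z * X)
     = - (A * (1 - u * X * Y) / (V * (1 - v * X * Y)) * (P * (1 - p * X)) / (Q * (1 - q * X)) * (L * (- X))^2 * (v * vn) * (Z * Y) * (1 - q * X))
       - - (A / V * P / Q * L^2 * vn * Z * (1 - X))"
proof -
  define c where "c = A / V * P / Q * L^2 * vn * Z"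
  define D where "D = 1 - v * X * Y"
  have D: "D \<noteq> 0" using nz D_def by simp
  have r1: "A * (1 - u * X * Y) / (V * (1 - v * X * Y)) * (1 - u * (X^2 * Y * q)) * P / Q * L^2 * vn * (Z * X)
        = c * ((1 - u * X * Y) * (1 - u * (X^2 * Y * q)) * X / D)"
    by (simp add: c_def D_def ac_simps)
  have r2: "A * (1 - u * X * Y) / (V * (1 - v * X * Y)) * (P * (1 - p * X)) / (Q * (1 - q * X)) * (L * (- X))^2 * (v * vn) * (Z * Y) * (1 - q * X)
        = c * ((1 - u * X * Y) * (v - u * q * X) * X^2 * Y / D)"
  proof -
    have f1: "(1 - p * X) * v = v - u * q * X" using pv by (simp add: algebra_simps)
    have f2: "(1 - q * X) / (1 - q * X) = 1" using nz by (simp add: mult.commute)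
    have f3: "A * (1 - u * X * Y) / (V * (1 - v * X * Y)) * (P * (1 - p * X)) / (Q * (1 - q * X)) * (L * (- X))^2 * (v * vn) * (Z * Y) * (1 - q * X)
      = c * ((1 - u * X * Y) * ((1 - p * X) * v) * ((1 - q * X) / (1 - q * X)) * X^2 * Y / D)"
      by (simp add: c_def D_def power2_eq_square divide_inverse ac_simps)
    show ?thesis unfolding f3 f1 f2 by simp
  qed
  have r3: "A / V * (1 - u * (X^2 * Y)) * P / Q * L^2 * vn * Z = c * (1 - u * (X^2 * Y))"
    "A / V * P / Q * L^2 * vn * Z * (1 - X) = c * (1 - X)" by (simp_all add: c_def)
  have e: "(1 - u * (X^2 * Y)) * D - (1 - u * X * Y) * (1 - u * (X^2 * Y * q)) * X
        = - ((1 - u * X * Y) * (v - u * q * X) * X^2 * Y) + (1 - X) * D"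
    unfolding D_def by algebra
  have "(1 - u * (X^2 * Y)) - (1 - u * X * Y) * (1 - u * (X^2 * Y * q)) * X / D
        = - ((1 - u * X * Y) * (v - u * q * X) * X^2 * Y / D) + (1 - X)"
    using e D by (simp add: field_simps)
  then have "c * ((1 - u * (X^2 * Y)) - (1 - u * X * Y) * (1 - u * (X^2 * Y * q)) * X / D)
        = c * (- ((1 - u * X * Y) * (v - u * q * X) * X^2 * Y / D) + (1 - X))" by simp
  then show ?thesis unfolding r1 r2 r3
    by (simp only: right_diff_distrib distrib_left mult_minus_right minus_minus diff_minus_eq_add)
qed



definition lq :: "complex \<Rightarrow> nat \<Rightarrow> complex" where
  "lq q n = (\<Prod>j<n. - (q ^ j))"

lemma lq_Suc: "lq q (Suc n) = lq q n * (- (q ^ n))"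
  by (simp add: lq_def)

lemma norm_lq_le:
  assumes "0 \<le> e"
  shows "norm (lq q n) \<le> (\<Prod>j<n. e + norm q ^ j)"
  unfolding lq_def prod_norm[symmetric]
  by (rule prod_mono) (use assms in \<open>auto simp: norm_power\<close>)

definition Tt :: "complex \<Rightarrow> complex \<Rightarrow> complex \<Rightarrow> complex \<Rightarrow> nat \<Rightarrow> nat \<Rightarrow> complex" where
  "Tt u v p q k n = qpoch u q (n + k) / qpoch v q (n + k) * (1 - u * q ^ (2 * n + k))
     * qpoch p q n / qpoch q q n * lq q n ^ 2 * v ^ n * q ^ (n * k)"

definition Wt :: "complex \<Rightarrow> complex \<Rightarrow> complex \<Rightarrow> complex \<Rightarrow> nat \<Rightarrow> nat \<Rightarrow> complex" where
  "Wt u v p q k n = - (qpoch u q (n + k) / qpoch v q (n + k)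
     * qpoch p q n / qpoch q q n * lq q n ^ 2 * v ^ n * q ^ (n * k) * (1 - q ^ n))"

lemma qpoch_q_nonzero:
  assumes "norm q < 1" shows "qpoch q q n \<noteq> 0"
proof (rule qpoch_nonzero)
  fix j
  have "norm (q * q ^ j) < 1" using assms
    by (simp add: norm_mult norm_power) (metis assms norm_ge_zero power_Suc power_less_one_iff zero_less_Suc power_strict_mono)
  then show "q * q ^ j \<noteq> 1" by auto
qed

locale gpart =
  fixes u v p q :: complex
  assumes q: "norm q < 1" and pv: "p * v = u * q"
    and u: "\<And>j. u * q ^ j \<noteq> 1" and v: "\<And>j. v * q ^ j \<noteq> 1"
begin

lemma vnz: "qpoch v q m \<noteq> 0" by (rule qpoch_nonzero[OF v])
lemma qnz: "qpoch q q m \<noteq> 0" by (rule qpoch_q_nonzero[OF q])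

lemma tele: "Tt u v p q k n - Tt u v p q (Suc k) n = Wt u v p q k (Suc n) - Wt u v p q k n"
proof -
  have a: "qpoch u q (n + Suc k) = qpoch u q (n + k) * (1 - u * q ^ n * q ^ k)"
    "qpoch u q (Suc n + k) = qpoch u q (n + k) * (1 - u * q ^ n * q ^ k)"
    by (simp_all add: qpoch_Suc power_add mult.assoc)
  have b: "qpoch v q (n + Suc k) = qpoch v q (n + k) * (1 - v * q ^ n * q ^ k)"
    "qpoch v q (Suc n + k) = qpoch v q (n + k) * (1 - v * q ^ n * q ^ k)"
    by (simp_all add: qpoch_Suc power_add mult.assoc)
  have nz1: "1 - v * q ^ n * q ^ k \<noteq> 0" using vnz[of "Suc (n + k)"] b(2) by auto
  have nz2: "1 - q * q ^ n \<noteq> 0" using qnz[of "Suc n"] by (auto simp: qpoch_Suc)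
  have q2: "q ^ (2 * n) = (q ^ n)^2" by (simp add: power_mult[symmetric] mult.commute)
  have pw: "q ^ (2 * n + k) = (q ^ n)^2 * q ^ k"
     "q ^ (2 * n + Suc k) = (q ^ n)^2 * q ^ k * q" "q ^ (n * Suc k) = q ^ (n * k) * q ^ n"
     "q ^ (Suc n * k) = q ^ (n * k) * q ^ k"
    by (simp_all add: power_add q2 power_mult_distrib)
  show ?thesis
    unfolding Tt_def Wt_def a b pw qpoch_Suc lq_Suc power_Suc
    by (rule tele_alg[OF pv vnz[of "n + k"] nz1 qnz[of n] nz2])
qed

end


context gpart begin

definition "Mv n = norm v ^ n * norm (lq q n) ^ 2"

lemma Mv_nonneg: "Mv n \<ge> 0" by (simp add: Mv_def)

lemma summable_Mv: "summable Mv"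
proof -
  define e where "e = 1 / (2 * (norm v + 1))"
  have pos: "0 < norm v + 1" using norm_ge_zero[of v] by linarith
  then have e0: "0 < e" unfolding e_def by simp
  have c: "4 * norm v * e ^ 2 < 1"
  proof -
    have "4 * norm v * e ^ 2 = norm v / (norm v + 1)^2"
      unfolding e_def using pos by (simp add: power2_eq_square divide_simps) (simp add: algebra_simps)
    also have "\<dots> < 1" by (simp add: power2_eq_square field_simps add_pos_nonneg)
    finally show ?thesis .
  qed
  have s: "summable (\<lambda>n. norm v ^ n * (\<Prod>j<n. e + norm q ^ j) ^ 2)"
    by (rule summable_prod_eps[OF q e0 _ c]) simp
  show ?thesis
  proof (rule summable_comparison_test[OF _ s], intro exI allI impI)
    fix n
    have "norm (lq q n) ^ 2 \<le> (\<Prod>j<n. e + norm q ^ j) ^ 2"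
      by (intro power_mono norm_lq_le) (use e0 in auto)
    then show "norm (Mv n) \<le> norm v ^ n * (\<Prod>j<n. e + norm q ^ j) ^ 2"
      unfolding Mv_def by (simp add: mult_left_mono)
  qed
qed

lemma bounds:
  obtains Cu Bv Cp Bq where "Cu \<ge> 0" "Bv \<ge> 0" "Cp \<ge> 0" "Bq \<ge> 0"
    "\<And>m. norm (qpoch u q m) \<le> Cu" "\<And>m. norm (1 / qpoch v q m) \<le> Bv"
    "\<And>m. norm (qpoch p q m) \<le> Cp" "\<And>m. norm (1 / qpoch q q m) \<le> Bq"
proof -
  obtain Bv where Bv: "\<And>m. norm (1 / qpoch v q m) \<le> Bv" using qpoch_inv_bounded[OF q v] by blast
  have qq: "q * q ^ j \<noteq> 1" for j using qnz[of "Suc j"] by (auto simp: qpoch_Suc)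
  obtain Bq where Bq: "\<And>m. norm (1 / qpoch q q m) \<le> Bq" using qpoch_inv_bounded[OF q qq] by blast
  show ?thesis
    by (rule that[OF _ _ _ _ qpoch_norm_le[OF q] Bv qpoch_norm_le[OF q] Bq])
       (use Bv[of 0] Bq[of 0] in auto)
qed

lemma Tt_bound: "\<exists>K\<ge>0. \<forall>k n. norm (Tt u v p q k n) \<le> K * Mv n"
proof -
  obtain Cu Bv Cp Bq where B: "Cu \<ge> 0" "Bv \<ge> 0" "Cp \<ge> 0" "Bq \<ge> 0"
    "\<And>m. norm (qpoch u q m) \<le> Cu" "\<And>m. norm (1 / qpoch v q m) \<le> Bv"
    "\<And>m. norm (qpoch p q m) \<le> Cp" "\<And>m. norm (1 / qpoch q q m) \<le> Bq" using bounds by blast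
  have qp: "norm q ^ m \<le> 1" for m using q by (simp add: power_le_one)
  have "norm (Tt u v p q k n) \<le> Cu * Bv * (1 + norm u) * Cp * Bq * Mv n" for k n
  proof -
    have "norm (Tt u v p q k n) = norm (qpoch u q (n + k)) * norm (1 / qpoch v q (n + k))
       * norm (1 - u * q ^ (2 * n + k)) * norm (qpoch p q n) * norm (1 / qpoch q q n)
       * (norm v ^ n * norm (lq q n) ^ 2) * norm q ^ (n * k)"
      by (simp add: Tt_def norm_mult norm_divide norm_power)
    also have "\<dots> \<le> Cu * Bv * (1 + norm u) * Cp * Bq * Mv n * 1"
    proof -
      have "norm (1 - u * q ^ (2 * n + k)) \<le> 1 + norm u"
        using norm_triangle_ineq4[of 1 "u * q ^ (2 * n + k)"] qp[of "2 * n + k"]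
        by (simp add: norm_mult norm_power) (smt (verit) mult_left_le norm_ge_zero)
      then show ?thesis unfolding Mv_def
        by (intro mult_mono B qp) (auto simp: Mv_def intro!: mult_nonneg_nonneg B(1-4))
    qed
    finally show ?thesis by simp
  qed
  then show ?thesis using B by (intro exI[of _ "Cu * Bv * (1 + norm u) * Cp * Bq"]) auto
qed

lemma Wt_bound: "\<exists>K\<ge>0. \<forall>k n. norm (Wt u v p q k n) \<le> K * Mv n"
proof -
  obtain Cu Bv Cp Bq where B: "Cu \<ge> 0" "Bv \<ge> 0" "Cp \<ge> 0" "Bq \<ge> 0"
    "\<And>m. norm (qpoch u q m) \<le> Cu" "\<And>m. norm (1 / qpoch v q m) \<le> Bv"
    "\<And>m. norm (qpoch p q m) \<le> Cp" "\<And>m. norm (1 / qpoch q q m) \<le> Bq" using bounds by blast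
  have qp: "norm q ^ m \<le> 1" for m using q by (simp add: power_le_one)
  have "norm (Wt u v p q k n) \<le> Cu * Bv * Cp * Bq * Mv n * 1 * 2" for k n
  proof -
    have "norm (Wt u v p q k n) = norm (qpoch u q (n + k)) * norm (1 / qpoch v q (n + k))
       * norm (qpoch p q n) * norm (1 / qpoch q q n)
       * (norm v ^ n * norm (lq q n) ^ 2) * norm q ^ (n * k) * norm (1 - q ^ n)"
      by (simp add: Wt_def norm_mult norm_divide norm_power)
    also have "\<dots> \<le> Cu * Bv * Cp * Bq * Mv n * 1 * 2"
    proof -
      have "norm (1 - q ^ n) \<le> 2"
        using norm_triangle_ineq4[of 1 "q ^ n"] qp[of n] by (simp add: norm_power)
      then show ?thesis unfolding Mv_def
        by (intro mult_mono B qp) (auto simp: Mv_def intro!: mult_nonneg_nonneg B(1-4))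
    qed
    finally show ?thesis .
  qed
  then show ?thesis using B by (intro exI[of _ "Cu * Bv * Cp * Bq * 2"]) (auto simp: mult_ac)
qed

lemma summable_Tt: "summable (Tt u v p q k)"
proof -
  obtain K where K: "K \<ge> 0" "\<And>k n. norm (Tt u v p q k n) \<le> K * Mv n" using Tt_bound by blast
  show ?thesis
    by (rule summable_comparison_test[OF _ summable_mult[OF summable_Mv, of K]]) (use K in auto)
qed

lemma Wt_lim: "(\<lambda>n. Wt u v p q k n) \<longlonglongrightarrow> 0"
proof -
  obtain K where K: "K \<ge> 0" "\<And>k n. norm (Wt u v p q k n) \<le> K * Mv n" using Wt_bound by blast
  have "summable (Wt u v p q k)"
    by (rule summable_comparison_test[OF _ summable_mult[OF summable_Mv, of K]]) (use K in auto)
  then show ?thesis by (rule summable_LIMSEQ_zero)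
qed

lemma G_step: "suminf (Tt u v p q (Suc k)) = suminf (Tt u v p q k)"
proof -
  have "(\<lambda>n. Tt u v p q k n - Tt u v p q (Suc k) n) sums (suminf (Tt u v p q k) - suminf (Tt u v p q (Suc k)))"
    by (intro sums_diff summable_sums summable_Tt)
  moreover have "(\<lambda>n. Tt u v p q k n - Tt u v p q (Suc k) n) sums (0 - Wt u v p q k 0)"
    unfolding tele by (rule telescope_sums[OF Wt_lim])
  moreover have "Wt u v p q k 0 = 0" by (simp add: Wt_def)
  ultimately show ?thesis using sums_unique2 by fastforce
qed

lemma G_const: "suminf (Tt u v p q k) = suminf (Tt u v p q 0)"
  by (induction k) (simp_all add: G_step)

end


context gpart begin

lemma qpoch_shift_LIMSEQ: "(\<lambda>k. qpoch t q (n + k)) \<longlonglongrightarrow> qpoch_inf t q"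
  using LIMSEQ_ignore_initial_segment[OF qpoch_LIMSEQ[OF q], of t n] by (simp add: add.commute)

lemma Tt_lim:
  "(\<lambda>k. Tt u v p q k n) \<longlonglongrightarrow> (if n = 0 then (1 - u) * qpoch_inf (u * q) q / qpoch_inf v q else 0)"
proof (cases n)
  case 0
  have "Tt u v p q k 0 = (1 - u) * qpoch (u * q) q k / qpoch v q k" for k
  proof -
    have "qpoch u q k * (1 - u * q ^ k) = (1 - u) * qpoch (u * q) q k"
      using qpoch_Suc[of u q k] qpoch_Suc'[of u q k] by simp
    then show ?thesis by (simp add: Tt_def lq_def)
  qed
  moreover have "(\<lambda>k. (1 - u) * qpoch (u * q) q k / qpoch v q k)
      \<longlonglongrightarrow> (1 - u) * qpoch_inf (u * q) q / qpoch_inf v q"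
    by (intro tendsto_intros qpoch_LIMSEQ[OF q] qpoch_inf_nonzero[OF q v])
  ultimately show ?thesis using 0 by simp
next
  case (Suc m)
  define c where "c = qpoch p q n / qpoch q q n * lq q n ^ 2 * v ^ n"
  have eq: "Tt u v p q k n = qpoch u q (n + k) / qpoch v q (n + k) * (1 - u * q ^ (2 * n) * q ^ k) * c * (q ^ n) ^ k" for k
  proof -
    have qq: "q ^ (n * k) = (q ^ n) ^ k" "q ^ (2 * n + k) = q ^ (2 * n) * q ^ k"
      by (simp_all add: power_mult power_add)
    show ?thesis unfolding Tt_def c_def qq by (simp add: mult_ac)
  qed
  have "norm q ^ Suc m \<le> norm q ^ 1" by (rule power_decreasing) (use q in auto)
  then have qn: "norm (q ^ n) < 1" using q Suc by (simp add: norm_power norm_mult)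
  have "(\<lambda>k. qpoch u q (n + k) / qpoch v q (n + k) * (1 - u * q ^ (2 * n) * q ^ k) * c * (q ^ n) ^ k)
      \<longlonglongrightarrow> qpoch_inf u q / qpoch_inf v q * (1 - u * q ^ (2 * n) * 0) * c * 0"
    by (intro tendsto_intros qpoch_shift_LIMSEQ qpoch_inf_nonzero[OF q v] LIMSEQ_power_zero qn q)
  then have "(\<lambda>k. Tt u v p q k n) \<longlonglongrightarrow> 0" unfolding eq by simp
  then show ?thesis using Suc by simp
qed

lemma G_val: "suminf (Tt u v p q k) = (1 - u) * qpoch_inf (u * q) q / qpoch_inf v q"
proof -
  define L0 where "L0 = (1 - u) * qpoch_inf (u * q) q / qpoch_inf v q"
  obtain K where K: "K \<ge> 0" "\<And>k n. norm (Tt u v p q k n) \<le> K * Mv n" using Tt_bound by blast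
  have "((\<lambda>k. \<Sum>n. Tt u v p q k n) \<longlonglongrightarrow> suminf (\<lambda>n. if n = 0 then L0 else 0))"
  proof (rule conjunct2[OF conjunct2[OF tannerys_theorem[where a = "\<lambda>n k. Tt u v p q k n" and M = "\<lambda>n. K * Mv n"]]])
    show "\<And>n. (\<lambda>k. Tt u v p q k n) \<longlonglongrightarrow> (if n = 0 then L0 else 0)"
      unfolding L0_def by (rule Tt_lim)
    show "\<forall>\<^sub>F (n, k) in sequentially \<times>\<^sub>F sequentially. norm (Tt u v p q k n) \<le> K * Mv n"
      using K by (simp add: case_prod_unfold)
    show "summable (\<lambda>n. K * Mv n)" by (intro summable_mult summable_Mv)
  qed simp
  moreover have "suminf (\<lambda>n. if n = 0 then L0 else 0) = L0"
    using sums_single[of 0 "\<lambda>_. L0"] by (simp add: sums_iff)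
  ultimately have "(\<lambda>k. suminf (Tt u v p q k)) \<longlonglongrightarrow> L0" by simp
  moreover have "(\<lambda>k. suminf (Tt u v p q k)) = (\<lambda>k. suminf (Tt u v p q 0))"
    using G_const by auto
  ultimately have "suminf (Tt u v p q 0) = L0" using LIMSEQ_const_iff by fastforce
  then show ?thesis using G_const L0_def by simp
qed

end


lemma M6alg:
  fixes U U' P Qn V V' H0 H1 A B L vn wk Z D2 D3 Du Qk :: complex
  assumes nz: "Du \<noteq> 0" "D2 \<noteq> 0" "Qn \<noteq> 0" "V \<noteq> 0" "Qk \<noteq> 0" "V' \<noteq> 0" "H0 \<noteq> 0" "B \<noteq> 0"
    and H: "H1 * D2 = H0 * D3"
  shows "(U * P / (Qn * V) * vn * (D2 / Du) * L^2) * ((U' * (H1 * A)) / (Qk * (V' * (H0 * B))) * (wk * Z))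
       = A / (Qk * B) * wk * ((U * U') / (V * V') * D3 * P / Qn * L^2 * vn * Z) / Du"
proof -
  have h: "H1 = H0 * D3 / D2" using H nz by (simp add: field_simps)
  show ?thesis unfolding h by (simp add: field_simps nz)
qed

lemma M1alg:
  fixes a1 a2 a3 a4 X Y b1 b2 b3 b4 c1 c2 v x y F :: complex
  shows "a1 * a2 * a3 * a4 * X * Y / (b1 * b2 * b3 * b4 * c1 * c2) * (v / (x * y)) ^ n * F
    = (a1 * a2 * a3 * a4 / (b1 * b2 * b3 * b4) * v ^ n) * (X / (c1 * x ^ n)) * (Y / (c2 * y ^ n)) * F"
  by (simp add: divide_inverse inverse_mult_distrib power_mult_distrib power_inverse mult_ac)

lemma Pcalg:
  fixes a1 a2 a3 a4 b1 b2 b3 b4 vn :: complex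
  shows "a1 * a2 * a3 * a4 / (b1 * b2 * b3 * b4) * vn = a1 * a4 / (b1 * b4) * vn * (a2 * a3 / (b2 * b3))"
  by (simp add: divide_inverse inverse_mult_distrib mult_ac)

lemma hhalg:
  fixes a1 a2 A q1 b1 b2 B W :: complex
  shows "(a1 * (a2 * A)) / (q1 * (b1 * (b2 * B))) * W
     = a1 * (a2 / b2) * A * (1 / q1) * (1 / b1) * (1 / B) * W"
  by (simp add: divide_inverse inverse_mult_distrib mult_ac)



lemma qpoch_tendsto:
  assumes "(f \<longlongrightarrow> L) F"
  shows "((\<lambda>x. qpoch (f x) q n) \<longlongrightarrow> qpoch L q n) F"
  unfolding qpoch_def by (intro tendsto_intros assms)

lemma qpoch_div_pow:
  assumes "x \<noteq> 0"
  shows "qpoch x q n / x ^ n = (\<Prod>j<n. inverse x - q ^ j)"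
proof -
  have "qpoch x q n / x ^ n = (\<Prod>j<n. (1 - x * q ^ j) / x)"
    by (simp add: qpoch_def prod_dividef)
  also have "\<dots> = (\<Prod>j<n. inverse x - q ^ j)"
    using assms by (intro prod.cong refl) (simp add: field_simps)
  finally show ?thesis .
qed

locale main =
  fixes u v p w q :: complex and As Bs :: "complex list"
  assumes mq: "norm q < 1" and mw: "norm w < 1" and mu0: "u \<noteq> 0"
    and mpv: "p * v = u * q" and muq: "\<And>k. u * q ^ k \<noteq> 1" and mvq: "\<And>k. v * q ^ k \<noteq> 1"
    and mBq: "\<And>B k. B \<in> set Bs \<Longrightarrow> B * q ^ k \<noteq> 1"
begin

sublocale gpart u v p q by unfold_locales (use mq mpv muq mvq in auto)

definition "Pc n = qpoch u q n * qpoch (csqrt u * q) q n * qpoch (- csqrt u * q) q n * qpoch p q n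
   / (qpoch q q n * qpoch (csqrt u) q n * qpoch (- csqrt u) q n * qpoch v q n) * v ^ n"

definition "Xf x n = qpoch x q n / (qpoch (u * q / x) q n * x ^ n)"

definition "hh n k = (\<Prod>a\<leftarrow>(u * q ^ n # u * q ^ (2 * n + 1) # As). qpoch a q k)
   / (qpoch q q k * (\<Prod>b\<leftarrow>(v * q ^ n # u * q ^ (2 * n) # Bs). qpoch b q k)) * (w * q ^ n) ^ k"

definition "coef k = (\<Prod>a\<leftarrow>As. qpoch a q k) / (qpoch q q k * (\<Prod>b\<leftarrow>Bs. qpoch b q k)) * w ^ k"

lemma M1: "qpoch u q n * qpoch (csqrt u * q) q n * qpoch (- csqrt u * q) q n * qpoch p q n
     * qpoch x q n * qpoch y q n
   / (qpoch q q n * qpoch (csqrt u) q n * qpoch (- csqrt u) q n * qpoch v q n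
     * qpoch (u * q / x) q n * qpoch (u * q / y) q n)
   * (v / (x * y)) ^ n
   * qphi (u * q ^ n # u * q ^ (2 * n + 1) # As) (v * q ^ n # u * q ^ (2 * n) # Bs) q (w * q ^ n)
   = Pc n * Xf x n * Xf y n * suminf (hh n)"
proof -
  have "qphi (u * q ^ n # u * q ^ (2 * n + 1) # As) (v * q ^ n # u * q ^ (2 * n) # Bs) q (w * q ^ n)
     = suminf (hh n)" unfolding qphi_def hh_def ..
  then show ?thesis unfolding Pc_def Xf_def by (simp only: M1alg)
qed

lemma M2: "((\<lambda>x. Xf x n) \<longlongrightarrow> lq q n) at_infinity"
proof -
  have ev: "eventually (\<lambda>x. Xf x n = (\<Prod>j<n. inverse x - q ^ j) / qpoch (u * q * inverse x) q n) at_infinity"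
    unfolding eventually_at_infinity
  proof (intro exI[of _ 1] allI impI)
    fix x :: complex assume "1 \<le> norm x"
    then have x0: "x \<noteq> 0" by auto
    have "Xf x n = (qpoch x q n / x ^ n) / qpoch (u * q * inverse x) q n"
      unfolding Xf_def by (simp add: divide_inverse mult_ac)
    then show "Xf x n = (\<Prod>j<n. inverse x - q ^ j) / qpoch (u * q * inverse x) q n"
      using qpoch_div_pow[OF x0] by simp
  qed
  have inv: "((\<lambda>x::complex. inverse x) \<longlongrightarrow> 0) at_infinity" using tendsto_inverse_0 by simp
  have "((\<lambda>x. (\<Prod>j<n. inverse x - q ^ j) / qpoch (u * q * inverse x) q n) \<longlongrightarrow>
      (\<Prod>j<n. 0 - q ^ j) / qpoch (u * q * 0) q n) at_infinity"
    by (intro tendsto_intros inv qpoch_tendsto) simp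
  then have "((\<lambda>x. (\<Prod>j<n. inverse x - q ^ j) / qpoch (u * q * inverse x) q n) \<longlongrightarrow> lq q n) at_infinity"
    by (simp add: lq_def)
  then show ?thesis using tendsto_cong[OF ev] by simp
qed

lemma M3:
  assumes e: "0 < e"
  shows "eventually (\<lambda>x. \<forall>n. norm (Xf x n) \<le> exp (1 / (1 - norm q)) * (\<Prod>j<n. e + norm q ^ j)) at_infinity"
  unfolding eventually_at_infinity
proof (intro exI[of _ "1 / e + 2 * norm (u * q) + 1"] allI impI)
  fix x :: complex and n assume x: "1 / e + 2 * norm (u * q) + 1 \<le> norm x"
  have x1: "1 \<le> norm x" using x e by (smt (verit) norm_ge_zero divide_pos_pos)
  then have x0: "x \<noteq> 0" by auto
  have ie: "norm (inverse x) \<le> e"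
  proof -
    have "1 / e \<le> norm x" using x by (smt (verit) norm_ge_zero)
    then have "1 \<le> e * norm x" using e by (simp add: field_simps)
    moreover have "norm (inverse x) = 1 / norm x" by (simp add: norm_inverse divide_inverse)
    ultimately show ?thesis using x0 by (simp add: divide_le_eq mult.commute)
  qed
  have sm: "norm (u * q / x) \<le> 1/2"
  proof -
    have "2 * norm (u * q) \<le> norm x" using x e by (smt (verit) divide_pos_pos)
    then show ?thesis using x0 by (simp add: norm_divide field_simps)
  qed
  have "norm (Xf x n) = norm (qpoch x q n / x ^ n) * norm (1 / qpoch (u * q / x) q n)"
    unfolding Xf_def by (simp add: norm_divide norm_mult)
  also have "\<dots> \<le> (\<Prod>j<n. e + norm q ^ j) * exp (1 / (1 - norm q))"
  proof (rule mult_mono)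
    have "norm (qpoch x q n / x ^ n) = (\<Prod>j<n. norm (inverse x - q ^ j))"
      by (simp add: qpoch_div_pow[OF x0] prod_norm)
    also have "\<dots> \<le> (\<Prod>j<n. e + norm q ^ j)"
    proof (rule prod_mono, safe)
      fix j
      show "0 \<le> norm (inverse x - q ^ j)" by simp
      have "norm (inverse x - q ^ j) \<le> norm (inverse x) + norm (q ^ j)" by (rule norm_triangle_ineq4)
      then show "norm (inverse x - q ^ j) \<le> e + norm q ^ j" using ie by (simp add: norm_power)
    qed
    finally show "norm (qpoch x q n / x ^ n) \<le> (\<Prod>j<n. e + norm q ^ j)" .
    have "norm (1 / qpoch (u * q / x) q n) \<le> exp (2 * norm (u * q / x) / (1 - norm q))"
      by (rule qpoch_inv_norm_le_small[OF mq sm])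
    also have "\<dots> \<le> exp (1 / (1 - norm q))"
      using sm mq by (intro exp_mono divide_right_mono) auto
    finally show "norm (1 / qpoch (u * q / x) q n) \<le> exp (1 / (1 - norm q))" .
    show "0 \<le> (\<Prod>j<n. e + norm q ^ j)" using e by (intro prod_nonneg) auto
  qed simp
  finally show "norm (Xf x n) \<le> exp (1 / (1 - norm q)) * (\<Prod>j<n. e + norm q ^ j)"
    by (simp add: mult.commute)
qed

lemma Pc_eq: "Pc n = qpoch u q n * qpoch p q n / (qpoch q q n * qpoch v q n) * v ^ n
    * ((1 - u * q ^ (2 * n)) / (1 - u))"
  unfolding Pc_def Pcalg qpoch_pm_ratio[OF power2_csqrt muq] ..

lemma M4: "\<exists>C\<ge>0. \<forall>n. norm (Pc n) \<le> C * norm v ^ n"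
proof -
  obtain Cu Bv Cp Bq where B: "Cu \<ge> 0" "Bv \<ge> 0" "Cp \<ge> 0" "Bq \<ge> 0"
    "\<And>m. norm (qpoch u q m) \<le> Cu" "\<And>m. norm (1 / qpoch v q m) \<le> Bv"
    "\<And>m. norm (qpoch p q m) \<le> Cp" "\<And>m. norm (1 / qpoch q q m) \<le> Bq" using bounds by blast
  have qp: "norm q ^ m \<le> 1" for m using mq by (simp add: power_le_one)
  have "norm (Pc n) \<le> Cu * Cp * Bq * Bv * ((1 + norm u) * norm (1 / (1 - u))) * norm v ^ n" for n
  proof -
    have "norm (Pc n) = norm (qpoch u q n) * norm (qpoch p q n) * norm (1 / qpoch q q n) * norm (1 / qpoch v q n)
       * (norm (1 - u * q ^ (2 * n)) * norm (1 / (1 - u))) * norm v ^ n"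
      unfolding Pc_eq by (simp add: norm_mult norm_divide norm_power)
    also have "\<dots> \<le> Cu * Cp * Bq * Bv * ((1 + norm u) * norm (1 / (1 - u))) * norm v ^ n"
    proof -
      have "norm (1 - u * q ^ (2 * n)) \<le> 1 + norm u"
        using norm_triangle_ineq4[of 1 "u * q ^ (2 * n)"] qp[of "2 * n"]
        by (simp add: norm_mult norm_power) (smt (verit) mult_left_le norm_ge_zero)
      then show ?thesis
        by (intro mult_mono B mult_right_mono) (auto intro!: mult_nonneg_nonneg B(1-4))
    qed
    finally show ?thesis .
  qed
  then show ?thesis using B
    by (intro exI[of _ "Cu * Cp * Bq * Bv * ((1 + norm u) * norm (1 / (1 - u)))"]) auto
qed

end


context main begin

definition "Aprod k = (\<Prod>a\<leftarrow>As. qpoch a q k)"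
definition "Bprod k = (\<Prod>b\<leftarrow>Bs. qpoch b q k)"

lemma hh_simp: "hh n k = (qpoch (u * q ^ n) q k * (qpoch (u * q ^ (2 * n + 1)) q k * Aprod k))
   / (qpoch q q k * (qpoch (v * q ^ n) q k * (qpoch (u * q ^ (2 * n)) q k * Bprod k))) * (w * q ^ n) ^ k"
  unfolding hh_def Aprod_def Bprod_def by simp

lemma coef_simp: "coef k = Aprod k / (qpoch q q k * Bprod k) * w ^ k"
  unfolding coef_def Aprod_def Bprod_def ..

lemma Bprod_nz: "Bprod k \<noteq> 0"
  unfolding Bprod_def using qpoch_nonzero[OF mBq] by (auto simp: prod_list_zero_iff)

lemma unz: "qpoch u q m \<noteq> 0" by (rule qpoch_nonzero[OF muq])

lemma shift_nz:
  assumes "\<And>j. t * q ^ j \<noteq> 1" shows "qpoch (t * q ^ n) q k \<noteq> 0"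
  by (rule qpoch_nonzero) (use assms in \<open>simp add: mult.assoc power_add[symmetric]\<close>)

lemma H_rel: "qpoch (u * q ^ (2 * n + 1)) q k * (1 - u * q ^ (2 * n))
    = qpoch (u * q ^ (2 * n)) q k * (1 - u * q ^ (2 * n + k))"
proof -
  have gen: "qpoch (t * q) q k * (1 - t) = qpoch t q k * (1 - t * q ^ k)" for t
    by (metis qpoch_Suc qpoch_Suc' mult.commute)
  have a: "u * q ^ (2 * n + 1) = u * q ^ (2 * n) * q" "u * q ^ (2 * n + k) = u * q ^ (2 * n) * q ^ k"
    by (simp_all add: power_add mult.assoc)
  show ?thesis unfolding a by (rule gen)
qed

lemma M6: "Pc n * lq q n ^ 2 * hh n k = coef k * Tt u v p q k n / (1 - u)"
proof -
  have wk: "(w * q ^ n) ^ k = w ^ k * q ^ (n * k)" by (simp add: power_mult_distrib power_mult)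
  have tt: "Tt u v p q k n = qpoch u q n * qpoch (u * q ^ n) q k / (qpoch v q n * qpoch (v * q ^ n) q k)
      * (1 - u * q ^ (2 * n + k)) * qpoch p q n / qpoch q q n * lq q n ^ 2 * v ^ n * q ^ (n * k)"
    unfolding Tt_def qpoch_add ..
  show ?thesis
    unfolding Pc_eq hh_simp coef_simp tt wk
    by (rule M6alg[OF _ _ qnz vnz qnz _ _ Bprod_nz H_rel])
       (use muq[of 0] muq[of "2 * n"] shift_nz[OF mvq] shift_nz[of u "2 * n"] muq in auto)
qed

end


context main begin

lemma hh_bound: "\<exists>D\<ge>0. \<forall>n k. norm (hh n k) \<le> D * norm w ^ k"
proof -
  obtain Cu Bv Cp Bq where B: "Cu \<ge> 0" "Bv \<ge> 0" "Cp \<ge> 0" "Bq \<ge> 0"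
    "\<And>m. norm (qpoch u q m) \<le> Cu" "\<And>m. norm (1 / qpoch v q m) \<le> Bv"
    "\<And>m. norm (qpoch p q m) \<le> Cp" "\<And>m. norm (1 / qpoch q q m) \<le> Bq" using bounds by blast
  obtain Bu where Bu: "\<And>m. norm (1 / qpoch u q m) \<le> Bu" using qpoch_inv_bounded[OF mq muq] by blast
  have Bu0: "Bu \<ge> 0" using Bu[of 0] norm_ge_zero order_trans by blast
  define Cv where "Cv = exp (norm v / (1 - norm q))"
  have Cv: "\<And>m. norm (qpoch v q m) \<le> Cv" unfolding Cv_def by (rule qpoch_norm_le[OF mq])
  have Cv0: "Cv \<ge> 0" unfolding Cv_def by simp
  obtain CA where CA: "CA \<ge> 0" "\<And>k. norm (Aprod k) \<le> CA"
    using list_qpoch_bounded[OF mq, of As] unfolding Aprod_def by blast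
  obtain CB where CB: "CB \<ge> 0" "\<And>k. norm (1 / Bprod k) \<le> CB"
    using list_qpoch_inv_bounded[OF mq mBq] unfolding Bprod_def by blast
  have qp: "norm q ^ m \<le> 1" for m using mq by (simp add: power_le_one)
  have f1: "norm (qpoch (u * q ^ n) q k) \<le> Cu * Bu" for n k
  proof -
    have "qpoch (u * q ^ n) q k = qpoch u q (n + k) * (1 / qpoch u q n)"
      using unz[of n] by (simp add: qpoch_add)
    then show ?thesis by (simp only: norm_mult) (intro mult_mono B Bu, auto)
  qed
  have f0: "norm (1 / (1 - u * q ^ m)) \<le> Cu * Bu" for m
  proof -
    have "1 / (1 - u * q ^ m) = qpoch u q m * (1 / qpoch u q (Suc m))"
      using unz[of m] by (simp add: qpoch_Suc)
    then show ?thesis by (simp only: norm_mult) (intro mult_mono B Bu, auto)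
  qed
  have f2: "norm (qpoch (u * q ^ (2 * n + 1)) q k / qpoch (u * q ^ (2 * n)) q k) \<le> (1 + norm u) * (Cu * Bu)" for n k
  proof -
    have nz: "qpoch (u * q ^ (2 * n)) q k \<noteq> 0" by (rule shift_nz[OF muq])
    have nz2: "1 - u * q ^ (2 * n) \<noteq> 0" using muq[of "2 * n"] by simp
    have eq: "qpoch (u * q ^ (2 * n + 1)) q k / qpoch (u * q ^ (2 * n)) q k
        = (1 - u * q ^ (2 * n + k)) * (1 / (1 - u * q ^ (2 * n)))"
      using H_rel[of n k] nz nz2 by (simp add: field_simps)
    have n1: "norm (1 - u * q ^ (2 * n + k)) \<le> 1 + norm u"
      using norm_triangle_ineq4[of 1 "u * q ^ (2 * n + k)"] qp[of "2 * n + k"]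
      by (simp add: norm_mult norm_power) (smt (verit) mult_left_le norm_ge_zero)
    have "norm ((1 - u * q ^ (2 * n + k)) * (1 / (1 - u * q ^ (2 * n)))) \<le> (1 + norm u) * (Cu * Bu)"
      unfolding norm_mult by (intro mult_mono n1 f0) auto
    then show ?thesis unfolding eq .
  qed
  have f3: "norm (1 / qpoch (v * q ^ n) q k) \<le> Cv * Bv" for n k
  proof -
    have "1 / qpoch (v * q ^ n) q k = qpoch v q n * (1 / qpoch v q (n + k))"
      using vnz[of n] shift_nz[OF mvq, of n k] by (simp add: qpoch_add)
    then show ?thesis by (simp only: norm_mult) (intro mult_mono Cv B, auto simp: Cv0)
  qed
  have f7: "norm ((w * q ^ n) ^ k) \<le> norm w ^ k" for n k
  proof -
    have "norm w * norm q ^ n \<le> norm w" using qp[of n] by (simp add: mult_left_le)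
    then show ?thesis by (simp add: norm_mult norm_power power_mult_distrib[symmetric] power_mono)
  qed
  define D where "D = (Cu * Bu) * ((1 + norm u) * (Cu * Bu)) * CA * Bq * (Cv * Bv) * CB"
  have "norm (hh n k) \<le> D * norm w ^ k" for n k
  proof -
    have "norm (hh n k) = norm (qpoch (u * q ^ n) q k) * norm (qpoch (u * q ^ (2 * n + 1)) q k / qpoch (u * q ^ (2 * n)) q k)
       * norm (Aprod k) * norm (1 / qpoch q q k) * norm (1 / qpoch (v * q ^ n) q k) * norm (1 / Bprod k)
       * norm ((w * q ^ n) ^ k)"
      unfolding hh_simp hhalg by (simp only: norm_mult)
    also have "\<dots> \<le> D * norm w ^ k" unfolding D_def
      by (intro mult_mono f1 f2 f3 f7 B CA CB) (auto intro!: mult_nonneg_nonneg B(1-4) Bu0 Cv0 CA CB)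
    finally show ?thesis .
  qed
  moreover have "D \<ge> 0" unfolding D_def by (auto intro!: mult_nonneg_nonneg B(1-4) Bu0 Cv0 CA CB)
  ultimately show ?thesis by blast
qed

lemma coef_bound: "\<exists>D\<ge>0. \<forall>k. norm (coef k) \<le> D * norm w ^ k"
proof -
  obtain Cu Bv Cp Bq where B: "Cu \<ge> 0" "Bv \<ge> 0" "Cp \<ge> 0" "Bq \<ge> 0"
    "\<And>m. norm (qpoch u q m) \<le> Cu" "\<And>m. norm (1 / qpoch v q m) \<le> Bv"
    "\<And>m. norm (qpoch p q m) \<le> Cp" "\<And>m. norm (1 / qpoch q q m) \<le> Bq" using bounds by blast
  obtain CA where CA: "CA \<ge> 0" "\<And>k. norm (Aprod k) \<le> CA"
    using list_qpoch_bounded[OF mq, of As] unfolding Aprod_def by blast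
  obtain CB where CB: "CB \<ge> 0" "\<And>k. norm (1 / Bprod k) \<le> CB"
    using list_qpoch_inv_bounded[OF mq mBq] unfolding Bprod_def by blast
  have "norm (coef k) \<le> CA * Bq * CB * norm w ^ k" for k
  proof -
    have "norm (coef k) = norm (Aprod k) * norm (1 / qpoch q q k) * norm (1 / Bprod k) * norm w ^ k"
      unfolding coef_simp by (simp add: norm_mult norm_divide norm_power)
    also have "\<dots> \<le> CA * Bq * CB * norm w ^ k"
      by (intro mult_mono B CA CB) (auto intro!: mult_nonneg_nonneg B(1-4) CA CB)
    finally show ?thesis .
  qed
  then show ?thesis using B CA CB by (intro exI[of _ "CA * Bq * CB"]) auto
qed

lemma summable_geo_w: "summable (\<lambda>k. D * norm w ^ k)"
  using mw by (intro summable_mult summable_geometric) auto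

lemma summable_hh: "summable (hh n)"
proof -
  obtain D where D: "D \<ge> 0" "\<And>n k. norm (hh n k) \<le> D * norm w ^ k" using hh_bound by blast
  show ?thesis by (rule summable_comparison_test[OF _ summable_geo_w[of D]]) (use D in auto)
qed

lemma summable_coef: "summable coef"
proof -
  obtain D where D: "D \<ge> 0" "\<And>k. norm (coef k) \<le> D * norm w ^ k" using coef_bound by blast
  show ?thesis by (rule summable_comparison_test[OF _ summable_geo_w[of D]]) (use D in auto)
qed

end


context main begin

definition "Tgt = qpoch_inf (u * q) q / qpoch_inf v q"

lemma col_sums: "(\<lambda>n. Pc n * lq q n ^ 2 * hh n k) sums (coef k * Tgt)"
proof -
  have u1: "1 - u \<noteq> 0" using muq[of 0] by simp
  have "Tt u v p q k sums ((1 - u) * Tgt)"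
    using summable_Tt[of k] G_val[of k] unfolding Tgt_def by (simp add: sums_iff)
  then have "(\<lambda>n. coef k * Tt u v p q k n / (1 - u)) sums (coef k * ((1 - u) * Tgt) / (1 - u))"
    by (intro sums_divide sums_mult)
  then show ?thesis using u1 by (simp add: M6)
qed

lemma Pc_lq_bound: "\<exists>C\<ge>0. \<forall>n. norm (Pc n * lq q n ^ 2) \<le> C * Mv n"
proof -
  obtain C where C: "C \<ge> 0" "\<And>n. norm (Pc n) \<le> C * norm v ^ n" using M4 by blast
  have "norm (Pc n * lq q n ^ 2) \<le> C * Mv n" for n
    unfolding Mv_def norm_mult norm_power using mult_right_mono[OF C(2)[of n], of "norm (lq q n) ^ 2"]
    by (simp add: mult.assoc)
  then show ?thesis using C by blast
qed

lemma M7: "(\<Sum>n. Pc n * lq q n ^ 2 * suminf (hh n)) = Tgt * suminf coef"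
proof -
  obtain C where C: "C \<ge> 0" "\<And>n. norm (Pc n * lq q n ^ 2) \<le> C * Mv n" using Pc_lq_bound by blast
  obtain D where D: "D \<ge> 0" "\<And>n k. norm (hh n k) \<le> D * norm w ^ k" using hh_bound by blast
  define Dw where "Dw = D / (1 - norm w)"
  have Dw0: "Dw \<ge> 0" unfolding Dw_def using D mw by simp
  have partial: "norm (\<Sum>k<K. hh n k) \<le> Dw" for n K
  proof -
    have "norm (\<Sum>k<K. hh n k) \<le> (\<Sum>k<K. D * norm w ^ k)"
      by (rule order_trans[OF norm_sum sum_mono]) (rule D(2))
    also have "\<dots> = D * (\<Sum>k<K. norm w ^ k)" by (simp add: sum_distrib_left)
    also have "\<dots> \<le> D * (1 / (1 - norm w))"
      using geom_partial_le[of "norm w" K] mw D by (intro mult_left_mono) auto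
    finally show ?thesis by (simp add: Dw_def)
  qed
  have lim1: "(\<lambda>K. \<Sum>n. Pc n * lq q n ^ 2 * (\<Sum>k<K. hh n k)) \<longlonglongrightarrow> (\<Sum>n. Pc n * lq q n ^ 2 * suminf (hh n))"
  proof (rule conjunct2[OF conjunct2[OF tannerys_theorem[where a = "\<lambda>n K. Pc n * lq q n ^ 2 * (\<Sum>k<K. hh n k)"
         and M = "\<lambda>n. C * Mv n * Dw"]]])
    show "\<And>n. (\<lambda>K. Pc n * lq q n ^ 2 * (\<Sum>k<K. hh n k)) \<longlonglongrightarrow> Pc n * lq q n ^ 2 * suminf (hh n)"
      by (intro tendsto_mult_left summable_LIMSEQ summable_hh)
    have "norm (Pc n * lq q n ^ 2 * (\<Sum>k<K. hh n k)) \<le> C * Mv n * Dw" for n K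
      unfolding norm_mult[of "Pc n * lq q n ^ 2"]
      by (intro mult_mono C partial) (auto intro!: mult_nonneg_nonneg C Mv_nonneg)
    then show "\<forall>\<^sub>F (n, K) in sequentially \<times>\<^sub>F sequentially. norm (Pc n * lq q n ^ 2 * (\<Sum>k<K. hh n k)) \<le> C * Mv n * Dw"
      by (simp add: case_prod_unfold)
    show "summable (\<lambda>n. C * Mv n * Dw)" by (intro summable_mult2 summable_mult summable_Mv)
  qed simp
  have eq: "(\<Sum>n. Pc n * lq q n ^ 2 * (\<Sum>k<K. hh n k)) = (\<Sum>k<K. coef k * Tgt)" for K
  proof -
    have "(\<Sum>n. Pc n * lq q n ^ 2 * (\<Sum>k<K. hh n k)) = (\<Sum>n. \<Sum>k<K. Pc n * lq q n ^ 2 * hh n k)"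
      by (simp only: sum_distrib_left)
    also have "\<dots> = (\<Sum>k<K. \<Sum>n. Pc n * lq q n ^ 2 * hh n k)"
      by (rule suminf_sum) (use col_sums in \<open>auto simp: sums_iff\<close>)
    also have "\<dots> = (\<Sum>k<K. coef k * Tgt)"
      using col_sums by (simp add: sums_iff)
    finally show ?thesis .
  qed
  have lim2: "(\<lambda>K. \<Sum>k<K. coef k * Tgt) \<longlonglongrightarrow> suminf coef * Tgt"
    unfolding sum_distrib_right[symmetric] by (intro tendsto_mult_right summable_LIMSEQ summable_coef)
  have "(\<lambda>K. \<Sum>k<K. coef k * Tgt) \<longlonglongrightarrow> (\<Sum>n. Pc n * lq q n ^ 2 * suminf (hh n))"
    using lim1 unfolding eq .
  from LIMSEQ_unique[OF this lim2] show ?thesis by (simp only: mult.commute)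
qed

end


context main begin

lemma phi_bound: "\<exists>Dw\<ge>0. \<forall>n. norm (suminf (hh n)) \<le> Dw"
proof -
  obtain D where D: "D \<ge> 0" "\<And>n k. norm (hh n k) \<le> D * norm w ^ k" using hh_bound by blast
  have sn: "summable (\<lambda>k. norm (hh n k))" for n
    by (rule summable_comparison_test[OF _ summable_geo_w[of D]]) (use D in auto)
  have "norm (suminf (hh n)) \<le> D * (1 / (1 - norm w))" for n
  proof -
    have "norm (suminf (hh n)) \<le> (\<Sum>k. norm (hh n k))" by (rule summable_norm[OF sn])
    also have "\<dots> \<le> (\<Sum>k. D * norm w ^ k)" by (rule suminf_le[OF D(2) sn summable_geo_w])
    also have "\<dots> = D * (1 / (1 - norm w))"
      using mw by (simp add: suminf_mult suminf_geometric summable_geometric)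
    finally show ?thesis .
  qed
  then show ?thesis using D mw by (intro exI[of _ "D * (1 / (1 - norm w))"]) auto
qed

lemma exists_e: "\<exists>e>0. 4 * norm v * e ^ 2 < 1"
proof -
  define e where "e = 1 / (2 * (norm v + 1))"
  have pos: "0 < norm v + 1" using norm_ge_zero[of v] by linarith
  then have e0: "0 < e" unfolding e_def by simp
  have "4 * norm v * e ^ 2 = norm v / (norm v + 1)^2"
    unfolding e_def using pos by (simp add: power2_eq_square divide_simps) (simp add: algebra_simps)
  also have "\<dots> < 1" by (simp add: power2_eq_square field_simps add_pos_nonneg)
  finally show ?thesis using e0 by blast
qed

lemma M8: "((\<lambda>(x, y). \<Sum>n.
            qpoch u q n * qpoch (csqrt u * q) q n * qpoch (- csqrt u * q) q n
              * qpoch p q n * qpoch x q n * qpoch y q n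
            / (qpoch q q n * qpoch (csqrt u) q n * qpoch (- csqrt u) q n
              * qpoch v q n * qpoch (u * q / x) q n * qpoch (u * q / y) q n)
            * (v / (x * y)) ^ n
            * qphi (u * q ^ n # u * q ^ (2 * n + 1) # As) (v * q ^ n # u * q ^ (2 * n) # Bs) q (w * q ^ n))
         \<longlongrightarrow> qpoch_inf (u * q) q / qpoch_inf v q * qphi As Bs q w)
         (at_infinity \<times>\<^sub>F at_infinity)"
proof -
  obtain e where e: "0 < e" "4 * norm v * e ^ 2 < 1" using exists_e by blast
  define E where "E = exp (1 / (1 - norm q))"
  define Pe where "Pe n = (\<Prod>j<n. e + norm q ^ j)" for n
  have Pe0: "Pe n \<ge> 0" for n unfolding Pe_def using e by (intro prod_nonneg) auto
  obtain CP where CP: "CP \<ge> 0" "\<And>n. norm (Pc n) \<le> CP * norm v ^ n" using M4 by blast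
  obtain Dw where Dw: "Dw \<ge> 0" "\<And>n. norm (suminf (hh n)) \<le> Dw" using phi_bound by blast
  have fn: "(\<lambda>(x, y). \<Sum>n.
            qpoch u q n * qpoch (csqrt u * q) q n * qpoch (- csqrt u * q) q n
              * qpoch p q n * qpoch x q n * qpoch y q n
            / (qpoch q q n * qpoch (csqrt u) q n * qpoch (- csqrt u) q n
              * qpoch v q n * qpoch (u * q / x) q n * qpoch (u * q / y) q n)
            * (v / (x * y)) ^ n
            * qphi (u * q ^ n # u * q ^ (2 * n + 1) # As) (v * q ^ n # u * q ^ (2 * n) # Bs) q (w * q ^ n))
      = (\<lambda>xy. \<Sum>n. Pc n * Xf (fst xy) n * Xf (snd xy) n * suminf (hh n))"
    unfolding M1 by (simp add: case_prod_unfold)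
  have tg: "qpoch_inf (u * q) q / qpoch_inf v q * qphi As Bs q w = (\<Sum>n. Pc n * lq q n ^ 2 * suminf (hh n))"
  proof -
    have "qphi As Bs q w = suminf coef" unfolding qphi_def coef_def ..
    then show ?thesis using M7 by (simp add: Tgt_def)
  qed
  have ev: "eventually (\<lambda>x. \<forall>n. norm (Xf x n) \<le> E * Pe n) at_infinity"
    using M3[OF e(1)] unfolding E_def Pe_def .
  have evp: "eventually (\<lambda>xy. (\<forall>n. norm (Xf (fst xy) n) \<le> E * Pe n) \<and> (\<forall>n. norm (Xf (snd xy) n) \<le> E * Pe n))
      (at_infinity \<times>\<^sub>F at_infinity)"
    by (rule eventually_prodI[OF ev ev])
  have bnd: "norm (Pc n * Xf (fst xy) n * Xf (snd xy) n * suminf (hh n)) \<le> CP * norm v ^ n * (E * Pe n) * (E * Pe n) * Dw"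
    if "\<forall>n. norm (Xf (fst xy) n) \<le> E * Pe n" "\<forall>n. norm (Xf (snd xy) n) \<le> E * Pe n" for n xy
    unfolding norm_mult
    by (intro mult_mono CP Dw that[rule_format]) (auto intro!: mult_nonneg_nonneg CP Pe0 simp: E_def)
  have "((\<lambda>xy. \<Sum>n. Pc n * Xf (fst xy) n * Xf (snd xy) n * suminf (hh n)) \<longlongrightarrow>
          (\<Sum>n. Pc n * lq q n ^ 2 * suminf (hh n))) (at_infinity \<times>\<^sub>F at_infinity)"
  proof (rule conjunct2[OF conjunct2[OF tannerys_theorem[where a = "\<lambda>n xy. Pc n * Xf (fst xy) n * Xf (snd xy) n * suminf (hh n)"
         and M = "\<lambda>n. CP * norm v ^ n * (E * Pe n) * (E * Pe n) * Dw"]]])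
    show "((\<lambda>xy. Pc n * Xf (fst xy) n * Xf (snd xy) n * suminf (hh n)) \<longlongrightarrow> Pc n * lq q n ^ 2 * suminf (hh n))
        (at_infinity \<times>\<^sub>F at_infinity)" for n
    proof -
      have "((\<lambda>xy. Pc n * Xf (fst xy) n * Xf (snd xy) n * suminf (hh n)) \<longlongrightarrow> Pc n * lq q n * lq q n * suminf (hh n))
          (at_infinity \<times>\<^sub>F at_infinity)"
        by (intro tendsto_intros filterlim_compose[OF M2 filterlim_fst] filterlim_compose[OF M2 filterlim_snd])
      then show ?thesis by (simp add: power2_eq_square mult.assoc)
    qed
    show "\<forall>\<^sub>F (n, xy) in sequentially \<times>\<^sub>F (at_infinity \<times>\<^sub>F at_infinity).
        norm (Pc n * Xf (fst xy) n * Xf (snd xy) n * suminf (hh n)) \<le> CP * norm v ^ n * (E * Pe n) * (E * Pe n) * Dw"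
      unfolding eventually_prod_filter[of _ sequentially]
      by (intro exI[of _ "\<lambda>_. True"] exI[of _ "\<lambda>xy. (\<forall>n. norm (Xf (fst xy) n) \<le> E * Pe n) \<and> (\<forall>n. norm (Xf (snd xy) n) \<le> E * Pe n)"])
         (use evp bnd in auto)
    have "summable (\<lambda>n. norm v ^ n * (\<Prod>j<n. e + norm q ^ j) ^ 2)"
      by (rule summable_prod_eps[OF mq e(1) _ e(2)]) simp
    then have "summable (\<lambda>n. (CP * E * E * Dw) * (norm v ^ n * Pe n ^ 2))"
      unfolding Pe_def by (rule summable_mult)
    then show "summable (\<lambda>n. CP * norm v ^ n * (E * Pe n) * (E * Pe n) * Dw)"
      by (simp add: power2_eq_square mult_ac)
  qed (simp add: prod_filter_eq_bot trivial_limit_at_infinity)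
  then show ?thesis unfolding fn tg .
qed

end


theorem corollary3p1:
  fixes r :: nat and a b c z q :: complex and As Bs :: "complex list"
  assumes "length As = r + 1" and "length Bs = r"
    and "norm q < 1" and "q \<noteq> 0" and "norm (c * z) < 1"
    and "a * z \<noteq> 0" and "b \<noteq> 0"
    and "\<And>k. a * z * q ^ k \<noteq> 1"
    and "\<And>k. b * z * q ^ k \<noteq> 1"
    and "\<And>B k. B \<in> set Bs \<Longrightarrow> B * q ^ k \<noteq> 1"
  shows "((\<lambda>(x, y). \<Sum>n.
            qpoch (a*z) q n * qpoch (csqrt (a*z) * q) q n * qpoch (- csqrt (a*z) * q) q n
              * qpoch (a*q/b) q n * qpoch x q n * qpoch y q n
            / (qpoch q q n * qpoch (csqrt (a*z)) q n * qpoch (- csqrt (a*z)) q n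
              * qpoch (b*z) q n * qpoch (a*z*q/x) q n * qpoch (a*z*q/y) q n)
            * (b*z/(x*y)) ^ n
            * qphi (a*z*q^n # a*z*q^(2*n+1) # As) (b*z*q^n # a*z*q^(2*n) # Bs) q (c*z*q^n))
         \<longlongrightarrow> qpoch_inf (a*z*q) q / qpoch_inf (b*z) q * qphi As Bs q (c*z))
         (at_infinity \<times>\<^sub>F at_infinity)"
proof -
  interpret main "a*z" "b*z" "a*q/b" "c*z" q As Bs
  proof
    show "norm q < 1" "norm (c * z) < 1" "a * z \<noteq> 0" by (fact assms)+
    show "a * q / b * (b * z) = a * z * q" using assms by (simp add: field_simps)
    show "a * z * q ^ k \<noteq> 1" for k by (fact assms)
    show "b * z * q ^ k \<noteq> 1" for k by (fact assms)
    show "B * q ^ k \<noteq> 1" if "B \<in> set Bs" for B k using assms that by blast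
  qed
  show ?thesis by (rule M8)
qed

end
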